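(* Let $M$ be a tabular MDP with finite $\mathcal S,\mathcal A$, discount $\gamma\in(0,1)$, and reward $r(\cdot;\theta^* )$ with $|r(s,a;\theta^* )|\le R_{\max}$. Let $P^*$ and $\tilde P$ be two transition models, and let $Q^*,\tilde Q$ be the fixed points of the soft Bellman update using $P^*$ and $\tilde P$ respectively, with policies $\pi^*(a\mid s;\theta^* )\propto\exp(Q^*(s,a;\theta^* ))$ and $\tilde\pi(a\mid s;\theta^* )\propto\exp(\tilde Q(s,a;\theta^* ))$. Let $\Delta_P=\sup_{s,a}\|P^*(\cdot\mid s,a)-\tilde P(\cdot\mid s,a)\|_1$. Then $$\mathbb E_{s\sim w^*}\big[D_{\mathrm{KL}}(\pi^*(\cdot\mid s;\theta^* )\,\|\,\tilde\pi(\cdot\mid s;\theta^* ))\big]\le\frac{2|\mathcal A|R_{\max}}{(1-\gamma)^2}\,\Delta_P .$$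
   Context: The soft Bellman update with transition model $P$ and discount $\gamma$ is $Q(s,a;\theta)=r(s,a;\theta)+\gamma\sum_{s'}P(s'\mid s,a)V(s';\theta)$, $V(s;\theta)=\log\sum_{a\in\mathcal A}\exp(Q(s,a;\theta))$. $w^*$ is the discounted stationary state distribution of $\pi^*$ (under the true MDP). *)

theory Defs
  imports Complex_Main
begin

text \<open>Tabular MDP: finite state type 's, finite action type 'a.
  A transition model is P :: 's => 'a => 's => real, P s a s' = P(s' | s, a).\<close>

definition stochastic_kernel :: "('s::finite \<Rightarrow> 'a::finite \<Rightarrow> 's \<Rightarrow> real) \<Rightarrow> bool" where
  "stochastic_kernel P \<longleftrightarrow> (\<forall>s a s'. 0 \<le> P s a s') \<and> (\<forall>s a. (\<Sum>s'\<in>UNIV. P s a s') = 1)"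

definition soft_value :: "('s \<Rightarrow> 'a::finite \<Rightarrow> real) \<Rightarrow> 's \<Rightarrow> real" where
  "soft_value Q s = ln (\<Sum>a\<in>UNIV. exp (Q s a))"

definition soft_bellman_fixpoint ::
  "real \<Rightarrow> ('s::finite \<Rightarrow> 'a::finite \<Rightarrow> real) \<Rightarrow> ('s \<Rightarrow> 'a \<Rightarrow> 's \<Rightarrow> real) \<Rightarrow> ('s \<Rightarrow> 'a \<Rightarrow> real) \<Rightarrow> bool" where
  "soft_bellman_fixpoint \<gamma> r P Q \<longleftrightarrow>
     (\<forall>s a. Q s a = r s a + \<gamma> * (\<Sum>s'\<in>UNIV. P s a s' * soft_value Q s'))"

definition softmax_policy :: "('s \<Rightarrow> 'a::finite \<Rightarrow> real) \<Rightarrow> 's \<Rightarrow> 'a \<Rightarrow> real" where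
  "softmax_policy Q s a = exp (Q s a) / (\<Sum>b\<in>UNIV. exp (Q s b))"

definition KL_div :: "('a::finite \<Rightarrow> real) \<Rightarrow> ('a \<Rightarrow> real) \<Rightarrow> real" where
  "KL_div p q = (\<Sum>a\<in>UNIV. p a * ln (p a / q a))"

definition policy_transition ::
  "('s::finite \<Rightarrow> 'a::finite \<Rightarrow> 's \<Rightarrow> real) \<Rightarrow> ('s \<Rightarrow> 'a \<Rightarrow> real) \<Rightarrow> 's \<Rightarrow> 's \<Rightarrow> real" where
  "policy_transition P \<pi> s s' = (\<Sum>a\<in>UNIV. \<pi> s a * P s a s')"

fun state_dist ::
  "('s::finite \<Rightarrow> real) \<Rightarrow> ('s \<Rightarrow> 'a::finite \<Rightarrow> 's \<Rightarrow> real) \<Rightarrow> ('s \<Rightarrow> 'a \<Rightarrow> real) \<Rightarrow> nat \<Rightarrow> 's \<Rightarrow> real" where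
  "state_dist \<mu>0 P \<pi> 0 = \<mu>0"
| "state_dist \<mu>0 P \<pi> (Suc t) = (\<lambda>s'. \<Sum>s\<in>UNIV. state_dist \<mu>0 P \<pi> t s * policy_transition P \<pi> s s')"

definition discounted_state_dist ::
  "real \<Rightarrow> ('s::finite \<Rightarrow> real) \<Rightarrow> ('s \<Rightarrow> 'a::finite \<Rightarrow> 's \<Rightarrow> real) \<Rightarrow> ('s \<Rightarrow> 'a \<Rightarrow> real) \<Rightarrow> 's \<Rightarrow> real" where
  "discounted_state_dist \<gamma> \<mu>0 P \<pi> s = (1 - \<gamma>) * (\<Sum>t. \<gamma> ^ t * state_dist \<mu>0 P \<pi> t s)"

text \<open>Delta_P = sup_{s,a} || P(.|s,a) - P'(.|s,a) ||_1 (a max, since everything is finite).\<close>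
definition model_dist ::
  "('s::finite \<Rightarrow> 'a::finite \<Rightarrow> 's \<Rightarrow> real) \<Rightarrow> ('s \<Rightarrow> 'a \<Rightarrow> 's \<Rightarrow> real) \<Rightarrow> real" where
  "model_dist P P' = Max (range (\<lambda>(s, a). \<Sum>s'\<in>UNIV. \<bar>P s a s' - P' s a s'\<bar>))"

end

theory Submission
  imports Defs
begin

lemma lse_diff:
  fixes x y :: "'a::finite \<Rightarrow> real"
  assumes "\<And>a. x a - y a \<le> D"
  shows "ln (\<Sum>a\<in>UNIV. exp (x a)) - ln (\<Sum>a\<in>UNIV. exp (y a)) \<le> D"
proof -
  have pos: "0 < (\<Sum>a\<in>UNIV. exp (y a))" by (intro sum_pos) auto
  have pos2: "0 < (\<Sum>a\<in>UNIV. exp (x a))" by (intro sum_pos) auto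
  have "(\<Sum>a\<in>UNIV. exp (x a)) \<le> (\<Sum>a\<in>UNIV. exp D * exp (y a))"
  proof (intro sum_mono)
    fix a
    have "x a \<le> D + y a" using assms[of a] by linarith
    then show "exp (x a) \<le> exp D * exp (y a)" by (simp add: exp_add[symmetric])
  qed
  also have "\<dots> = exp D * (\<Sum>a\<in>UNIV. exp (y a))" by (simp add: sum_distrib_left)
  finally have "ln (\<Sum>a\<in>UNIV. exp (x a)) \<le> ln (exp D * (\<Sum>a\<in>UNIV. exp (y a)))"
    using pos pos2 by simp
  also have "\<dots> = D + ln (\<Sum>a\<in>UNIV. exp (y a))" using pos by (simp add: ln_mult)
  finally show ?thesis by simp
qed

lemma KL_softmax_bound:
  fixes Q1 Q2 :: "'s \<Rightarrow> 'a::finite \<Rightarrow> real"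
  assumes "\<And>a. \<bar>Q1 s a - Q2 s a\<bar> \<le> D"
  shows "KL_div (softmax_policy Q1 s) (softmax_policy Q2 s) \<le> 2 * D"
proof -
  define S1 where "S1 = (\<Sum>b\<in>UNIV. exp (Q1 s b))"
  define S2 where "S2 = (\<Sum>b\<in>UNIV. exp (Q2 s b))"
  have S1: "0 < S1" unfolding S1_def by (intro sum_pos) auto
  have S2: "0 < S2" unfolding S2_def by (intro sum_pos) auto
  have p: "\<And>a. softmax_policy Q1 s a = exp (Q1 s a) / S1"
    unfolding softmax_policy_def S1_def by simp
  have q: "\<And>a. softmax_policy Q2 s a = exp (Q2 s a) / S2"
    unfolding softmax_policy_def S2_def by simp
  have lnq: "ln (softmax_policy Q1 s a / softmax_policy Q2 s a) = (Q1 s a - Q2 s a) - (ln S1 - ln S2)" for a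
    using S1 S2 by (simp add: p q ln_divide_pos ln_mult)
  have sum1: "(\<Sum>a\<in>UNIV. softmax_policy Q1 s a) = 1"
    using S1 by (simp add: p sum_divide_distrib[symmetric] S1_def)
  have sum1c: "(\<Sum>a\<in>UNIV. c * softmax_policy Q1 s a) = c" for c
    using sum1 by (simp add: sum_distrib_left[symmetric])
  have pnn: "0 \<le> softmax_policy Q1 s a" for a using S1 by (simp add: p)
  have "KL_div (softmax_policy Q1 s) (softmax_policy Q2 s)
      = (\<Sum>a\<in>UNIV. softmax_policy Q1 s a * (Q1 s a - Q2 s a)) - (ln S1 - ln S2) * (\<Sum>a\<in>UNIV. softmax_policy Q1 s a)"
    unfolding KL_div_def lnq
    using sum1c sum1 by (simp add: right_diff_distrib sum_subtractf sum_distrib_right mult.commute)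
  also have "\<dots> = (\<Sum>a\<in>UNIV. softmax_policy Q1 s a * (Q1 s a - Q2 s a)) + (ln S2 - ln S1)"
    using sum1 by simp
  also have "(\<Sum>a\<in>UNIV. softmax_policy Q1 s a * (Q1 s a - Q2 s a)) \<le> (\<Sum>a\<in>UNIV. softmax_policy Q1 s a * D)"
  proof (intro sum_mono mult_left_mono pnn)
    fix a show "Q1 s a - Q2 s a \<le> D" using assms[of a] by linarith
  qed
  also have "\<dots> = D" using sum1 by (simp add: sum_distrib_right[symmetric])
  also have "ln S2 - ln S1 \<le> D"
    unfolding S1_def S2_def
  proof (rule lse_diff)
    fix a show "Q2 s a - Q1 s a \<le> D" using assms[of a] by linarith
  qed
  finally show ?thesis by simp
qed

lemma softmax_nonneg: "0 \<le> softmax_policy Q s a"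
  unfolding softmax_policy_def by (intro divide_nonneg_nonneg) (auto intro: sum_nonneg)

lemma softmax_sum: "(\<Sum>a\<in>UNIV. softmax_policy (Q :: 's \<Rightarrow> 'a::finite \<Rightarrow> real) s a) = 1"
proof -
  have "0 < (\<Sum>b\<in>UNIV. exp (Q s b))" by (intro sum_pos) auto
  then show ?thesis unfolding softmax_policy_def by (simp add: sum_divide_distrib[symmetric])
qed

lemma state_dist_props:
  fixes P :: "'s::finite \<Rightarrow> 'a::finite \<Rightarrow> 's \<Rightarrow> real"
  assumes P: "stochastic_kernel P" and pnn: "\<And>s a. 0 \<le> \<pi> s a"
    and psum: "\<And>s. (\<Sum>a\<in>UNIV. \<pi> s a) = 1"
    and m0: "\<And>s. 0 \<le> \<mu>0 s" and m1: "(\<Sum>s\<in>UNIV. \<mu>0 s) = 1"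
  shows "(\<forall>s. 0 \<le> state_dist \<mu>0 P \<pi> t s) \<and> (\<Sum>s\<in>UNIV. state_dist \<mu>0 P \<pi> t s) = 1"
proof (induction t)
  case 0
  then show ?case using m0 m1 by simp
next
  case (Suc t)
  have Tnn: "0 \<le> policy_transition P \<pi> s s'" for s s'
    unfolding policy_transition_def using P pnn
    by (auto intro!: sum_nonneg mult_nonneg_nonneg simp: stochastic_kernel_def)
  have Tsum: "(\<Sum>s'\<in>UNIV. policy_transition P \<pi> s s') = 1" for s
  proof -
    have "(\<Sum>s'\<in>UNIV. policy_transition P \<pi> s s') = (\<Sum>a\<in>UNIV. \<pi> s a * (\<Sum>s'\<in>UNIV. P s a s'))"
      unfolding policy_transition_def sum_distrib_left by (rule sum.swap)
    also have "\<dots> = 1" using P psum by (simp add: stochastic_kernel_def)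
    finally show ?thesis .
  qed
  have "(\<Sum>s'\<in>UNIV. \<Sum>s\<in>UNIV. state_dist \<mu>0 P \<pi> t s * policy_transition P \<pi> s s')
      = (\<Sum>s\<in>UNIV. state_dist \<mu>0 P \<pi> t s * (\<Sum>s'\<in>UNIV. policy_transition P \<pi> s s'))"
    unfolding sum_distrib_left by (rule sum.swap)
  also have "\<dots> = 1" using Suc Tsum by simp
  finally show ?case using Suc Tnn by (auto intro!: sum_nonneg mult_nonneg_nonneg)
qed

lemma weights:
  fixes P :: "'s::finite \<Rightarrow> 'a::finite \<Rightarrow> 's \<Rightarrow> real"
  assumes P: "stochastic_kernel P" and pnn: "\<And>s a. 0 \<le> \<pi> s a"
    and psum: "\<And>s. (\<Sum>a\<in>UNIV. \<pi> s a) = 1"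
    and m0: "\<And>s. 0 \<le> \<mu>0 s" and m1: "(\<Sum>s\<in>UNIV. \<mu>0 s) = 1"
    and g: "0 < \<gamma>" "\<gamma> < 1"
  shows "(\<forall>s. 0 \<le> discounted_state_dist \<gamma> \<mu>0 P \<pi> s) \<and> (\<Sum>s\<in>UNIV. discounted_state_dist \<gamma> \<mu>0 P \<pi> s) = 1"
proof -
  note sd = state_dist_props[OF P pnn psum m0 m1]
  have le1: "state_dist \<mu>0 P \<pi> t s \<le> 1" for t s
  proof -
    have "state_dist \<mu>0 P \<pi> t s \<le> (\<Sum>s\<in>UNIV. state_dist \<mu>0 P \<pi> t s)"
      using sd[where t=t] by (intro member_le_sum) auto
    then show ?thesis using sd[where t=t] by simp
  qed
  have summ: "summable (\<lambda>t. \<gamma> ^ t * state_dist \<mu>0 P \<pi> t s)" for s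
  proof (rule summable_comparison_test'[OF summable_geometric[of \<gamma>]])
    show "norm \<gamma> < 1" using g by simp
    fix n :: nat
    have "\<gamma> ^ n * state_dist \<mu>0 P \<pi> n s \<le> \<gamma> ^ n * 1"
      using g le1 by (intro mult_left_mono) auto
    then show "norm (\<gamma> ^ n * state_dist \<mu>0 P \<pi> n s) \<le> \<gamma> ^ n"
      using g sd[where t=n] by simp
  qed
  have nn: "0 \<le> discounted_state_dist \<gamma> \<mu>0 P \<pi> s" for s
    unfolding discounted_state_dist_def using g sd
    by (intro mult_nonneg_nonneg suminf_nonneg summ) auto
  have "(\<Sum>s\<in>UNIV. discounted_state_dist \<gamma> \<mu>0 P \<pi> s)
      = (1 - \<gamma>) * (\<Sum>s\<in>UNIV. \<Sum>t. \<gamma> ^ t * state_dist \<mu>0 P \<pi> t s)"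
    unfolding discounted_state_dist_def by (simp add: sum_distrib_left)
  also have "(\<Sum>s\<in>UNIV. \<Sum>t. \<gamma> ^ t * state_dist \<mu>0 P \<pi> t s) = (\<Sum>t. \<Sum>s\<in>UNIV. \<gamma> ^ t * state_dist \<mu>0 P \<pi> t s)"
    using summ by (simp add: suminf_sum)
  also have "\<dots> = (\<Sum>t. \<gamma> ^ t)" using sd by (simp add: sum_distrib_left[symmetric])
  also have "\<dots> = 1 / (1 - \<gamma>)" using g by (intro suminf_geometric) simp
  finally show ?thesis using nn g by simp
qed

lemma Qdiff:
  fixes r :: "'s::finite \<Rightarrow> 'a::finite \<Rightarrow> real"
    and Pstar Ptil :: "'s \<Rightarrow> 'a \<Rightarrow> 's \<Rightarrow> real"
    and Qstar Qtil :: "'s \<Rightarrow> 'a \<Rightarrow> real"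
  assumes g: "0 < \<gamma>" "\<gamma> < 1"
    and rb: "\<And>s a. \<bar>r s a\<bar> \<le> Rmax"
    and Ps: "stochastic_kernel Pstar" and Pt: "stochastic_kernel Ptil"
    and Fs: "soft_bellman_fixpoint \<gamma> r Pstar Qstar"
    and Ft: "soft_bellman_fixpoint \<gamma> r Ptil Qtil"
  shows "\<bar>Qstar s a - Qtil s a\<bar> \<le> model_dist Pstar Ptil * Rmax / (1 - \<gamma>)^2"
proof -
  define \<Delta> where "\<Delta> = model_dist Pstar Ptil"
  define V1 where "V1 = soft_value Qstar"
  define V2 where "V2 = soft_value Qtil"
  have Rnn: "0 \<le> Rmax" using rb[of undefined undefined] by linarith
  have dP: "(\<Sum>s'\<in>UNIV. \<bar>Pstar s a s' - Ptil s a s'\<bar>) \<le> \<Delta>" for s a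
  proof -
    have "(\<lambda>(s, a). \<Sum>s'\<in>UNIV. \<bar>Pstar s a s' - Ptil s a s'\<bar>) (s, a)
        \<le> Max (range (\<lambda>(s, a). \<Sum>s'\<in>UNIV. \<bar>Pstar s a s' - Ptil s a s'\<bar>))"
      by (rule Max_ge) auto
    then show ?thesis unfolding \<Delta>_def model_dist_def by simp
  qed
  have Dnn: "0 \<le> \<Delta>" using dP[of undefined undefined] by (meson order_trans sum_nonneg abs_ge_zero)
  have Qs: "Qstar s a = r s a + \<gamma> * (\<Sum>s'\<in>UNIV. Pstar s a s' * V1 s')" for s a
    using Fs unfolding soft_bellman_fixpoint_def V1_def by blast
  have Qt: "Qtil s a = r s a + \<gamma> * (\<Sum>s'\<in>UNIV. Ptil s a s' * V2 s')" for s a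
    using Ft unfolding soft_bellman_fixpoint_def V2_def by blast
  have Psnn: "0 \<le> Pstar s a s'" and Ps1: "(\<Sum>s'\<in>UNIV. Pstar s a s') = 1" for s a s'
    using Ps unfolding stochastic_kernel_def by auto
  have Ptnn: "0 \<le> Ptil s a s'" and Pt1: "(\<Sum>s'\<in>UNIV. Ptil s a s') = 1" for s a s'
    using Pt unfolding stochastic_kernel_def by auto
  have Vmono: "V1 s - V1 s' \<le> D" if "\<And>a. Qstar s a - Qstar s' a \<le> D" for s s' D
    unfolding V1_def soft_value_def by (rule lse_diff) (rule that)
  define M where "M = Max (range V1)"
  define m where "m = Min (range V1)"
  have VM: "V1 s \<le> M" and Vm: "m \<le> V1 s" for s unfolding M_def m_def by auto
  have avg_le: "(\<Sum>s'\<in>UNIV. Pstar s a s' * V1 s') \<le> M" for s a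
  proof -
    have "(\<Sum>s'\<in>UNIV. Pstar s a s' * V1 s') \<le> (\<Sum>s'\<in>UNIV. Pstar s a s' * M)"
      by (intro sum_mono mult_left_mono VM Psnn)
    also have "\<dots> = M" using Ps1 by (simp add: sum_distrib_right[symmetric])
    finally show ?thesis .
  qed
  have avg_ge: "m \<le> (\<Sum>s'\<in>UNIV. Pstar s a s' * V1 s')" for s a
  proof -
    have "(\<Sum>s'\<in>UNIV. Pstar s a s' * m) \<le> (\<Sum>s'\<in>UNIV. Pstar s a s' * V1 s')"
      by (intro sum_mono mult_left_mono Vm Psnn)
    moreover have "(\<Sum>s'\<in>UNIV. Pstar s a s' * m) = m" using Ps1 by (simp add: sum_distrib_right[symmetric])
    ultimately show ?thesis by simp
  qed
  have osc: "V1 s - V1 s' \<le> 2 * Rmax + \<gamma> * (M - m)" for s s'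
  proof (rule Vmono)
    fix a
    have "\<gamma> * (\<Sum>s''\<in>UNIV. Pstar s a s'' * V1 s'') \<le> \<gamma> * M" using g avg_le by (intro mult_left_mono) auto
    moreover have "\<gamma> * m \<le> \<gamma> * (\<Sum>s''\<in>UNIV. Pstar s' a s'' * V1 s'')" using g avg_ge by (intro mult_left_mono) auto
    moreover have "r s a - r s' a \<le> 2 * Rmax" using rb[of s a] rb[of s' a] by linarith
    ultimately show "Qstar s a - Qstar s' a \<le> 2 * Rmax + \<gamma> * (M - m)"
      unfolding Qs by (simp add: algebra_simps)
  qed
  have "M \<in> range V1" unfolding M_def by (rule Max_in) auto
  then obtain s1 where s1: "V1 s1 = M" by auto
  have "m \<in> range V1" unfolding m_def by (rule Min_in) auto
  then obtain s2 where s2: "V1 s2 = m" by auto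
  have "M - m \<le> 2 * Rmax + \<gamma> * (M - m)" using osc[of s1 s2] s1 s2 by simp
  then have osc2: "(1 - \<gamma>) * (M - m) \<le> 2 * Rmax" by (simp add: algebra_simps)
  define K where "K = Rmax / (1 - \<gamma>)"
  define c where "c = (M + m) / 2"
  have Knn: "0 \<le> K" unfolding K_def using Rnn g by simp
  have half: "(M - m) / 2 \<le> K"
    unfolding K_def using osc2 g by (simp add: field_simps)
  have Vc: "\<bar>V1 s - c\<bar> \<le> K" for s using VM[of s] Vm[of s] half unfolding c_def by (simp add: abs_le_iff field_simps)
  define E where "E = Max (range (\<lambda>(s, a). \<bar>Qstar s a - Qtil s a\<bar>))"
  have QE: "\<bar>Qstar s a - Qtil s a\<bar> \<le> E" for s a
  proof -
    have "(\<lambda>(s, a). \<bar>Qstar s a - Qtil s a\<bar>) (s, a) \<le> E" unfolding E_def by (rule Max_ge) auto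
    then show ?thesis by simp
  qed
  have VE: "\<bar>V1 s - V2 s\<bar> \<le> E" for s
  proof -
    have "V1 s - V2 s \<le> E" unfolding V1_def V2_def soft_value_def
      by (rule lse_diff) (metis QE abs_le_D1)
    moreover have "V2 s - V1 s \<le> E" unfolding V1_def V2_def soft_value_def
      by (rule lse_diff) (metis QE abs_le_D2 minus_diff_eq)
    ultimately show ?thesis by linarith
  qed
  have key: "\<bar>Qstar s a - Qtil s a\<bar> \<le> \<gamma> * (\<Delta> * K + E)" for s a
  proof -
    have id: "(\<Sum>s'\<in>UNIV. Pstar s a s' * V1 s') - (\<Sum>s'\<in>UNIV. Ptil s a s' * V2 s')
       = (\<Sum>s'\<in>UNIV. (Pstar s a s' - Ptil s a s') * (V1 s' - c)) + (\<Sum>s'\<in>UNIV. Ptil s a s' * (V1 s' - V2 s'))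
         + c * (\<Sum>s'\<in>UNIV. Pstar s a s') - c * (\<Sum>s'\<in>UNIV. Ptil s a s')"
      by (simp add: algebra_simps sum.distrib sum_subtractf sum_distrib_left)
    have A: "\<bar>\<Sum>s'\<in>UNIV. (Pstar s a s' - Ptil s a s') * (V1 s' - c)\<bar> \<le> \<Delta> * K"
    proof -
      have "\<bar>\<Sum>s'\<in>UNIV. (Pstar s a s' - Ptil s a s') * (V1 s' - c)\<bar>
          \<le> (\<Sum>s'\<in>UNIV. \<bar>(Pstar s a s' - Ptil s a s') * (V1 s' - c)\<bar>)" by (rule sum_abs)
      also have "\<dots> \<le> (\<Sum>s'\<in>UNIV. \<bar>Pstar s a s' - Ptil s a s'\<bar> * K)"
        by (intro sum_mono) (simp add: abs_mult mult_left_mono Vc)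
      also have "\<dots> \<le> \<Delta> * K" using dP[of s a] Knn by (simp add: sum_distrib_right[symmetric] mult_right_mono)
      finally show ?thesis .
    qed
    have B: "\<bar>\<Sum>s'\<in>UNIV. Ptil s a s' * (V1 s' - V2 s')\<bar> \<le> E"
    proof -
      have "\<bar>\<Sum>s'\<in>UNIV. Ptil s a s' * (V1 s' - V2 s')\<bar>
          \<le> (\<Sum>s'\<in>UNIV. \<bar>Ptil s a s' * (V1 s' - V2 s')\<bar>)" by (rule sum_abs)
      also have "\<dots> \<le> (\<Sum>s'\<in>UNIV. Ptil s a s' * E)"
        by (intro sum_mono) (simp add: abs_mult mult_left_mono VE Ptnn)
      also have "\<dots> = E" using Pt1 by (simp add: sum_distrib_right[symmetric])
      finally show ?thesis .
    qed
    have "Qstar s a - Qtil s a = \<gamma> * ((\<Sum>s'\<in>UNIV. Pstar s a s' * V1 s') - (\<Sum>s'\<in>UNIV. Ptil s a s' * V2 s'))"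
      unfolding Qs Qt by (simp add: algebra_simps)
    also have "\<dots> = \<gamma> * ((\<Sum>s'\<in>UNIV. (Pstar s a s' - Ptil s a s') * (V1 s' - c)) + (\<Sum>s'\<in>UNIV. Ptil s a s' * (V1 s' - V2 s')))"
      unfolding id using Ps1 Pt1 by simp
    finally have "\<bar>Qstar s a - Qtil s a\<bar> = \<gamma> * \<bar>(\<Sum>s'\<in>UNIV. (Pstar s a s' - Ptil s a s') * (V1 s' - c)) + (\<Sum>s'\<in>UNIV. Ptil s a s' * (V1 s' - V2 s'))\<bar>"
      using g by (simp add: abs_mult)
    also have "\<dots> \<le> \<gamma> * (\<Delta> * K + E)"
      using A B g by (intro mult_left_mono) (auto intro: order_trans[OF abs_triangle_ineq])
    finally show ?thesis .
  qed
  have "E \<in> range (\<lambda>(s, a). \<bar>Qstar s a - Qtil s a\<bar>)" unfolding E_def by (rule Max_in) auto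
  then obtain p where p: "p \<in> UNIV" "E = (\<lambda>(s, a). \<bar>Qstar s a - Qtil s a\<bar>) p" by auto
  obtain s0 a0 where "p = (s0, a0)" by (cases p)
  with p have E0: "E = \<bar>Qstar s0 a0 - Qtil s0 a0\<bar>" by simp
  have "E \<le> \<gamma> * (\<Delta> * K + E)" using key[of s0 a0] E0 by simp
  then have "(1 - \<gamma>) * E \<le> \<gamma> * (\<Delta> * K)" by (simp add: algebra_simps)
  also have "\<dots> \<le> \<Delta> * K" using g Dnn Knn by (simp add: mult_left_le_one_le)
  finally have "E \<le> \<Delta> * K / (1 - \<gamma>)" using g by (simp add: field_simps)
  also have "\<dots> = \<Delta> * Rmax / (1 - \<gamma>)^2" unfolding K_def using g by (simp add: power2_eq_square)
  finally show ?thesis using QE[of s a] unfolding \<Delta>_def by linarith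
qed

theorem corollary1:
  fixes r :: "'s::finite \<Rightarrow> 'a::finite \<Rightarrow> real"
    and Pstar Ptil :: "'s \<Rightarrow> 'a \<Rightarrow> 's \<Rightarrow> real"
    and Qstar Qtil :: "'s \<Rightarrow> 'a \<Rightarrow> real"
    and \<mu>0 :: "'s \<Rightarrow> real"
    and \<gamma> Rmax :: real
  assumes "0 < \<gamma>" and "\<gamma> < 1"
    and "\<And>s a. \<bar>r s a\<bar> \<le> Rmax"
    and "stochastic_kernel Pstar" and "stochastic_kernel Ptil"
    and "soft_bellman_fixpoint \<gamma> r Pstar Qstar"
    and "soft_bellman_fixpoint \<gamma> r Ptil Qtil"
    and "\<And>s. 0 \<le> \<mu>0 s" and "(\<Sum>s\<in>UNIV. \<mu>0 s) = 1"
  shows "(\<Sum>s\<in>UNIV. discounted_state_dist \<gamma> \<mu>0 Pstar (softmax_policy Qstar) s *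
            KL_div (softmax_policy Qstar s) (softmax_policy Qtil s))
         \<le> 2 * real (card (UNIV :: 'a set)) * Rmax / (1 - \<gamma>)^2 * model_dist Pstar Ptil"
proof -
  define B where "B = 2 * real (card (UNIV :: 'a set)) * Rmax / (1 - \<gamma>)^2 * model_dist Pstar Ptil"
  define w where "w = discounted_state_dist \<gamma> \<mu>0 Pstar (softmax_policy Qstar)"
  have W: "(\<forall>s. 0 \<le> w s) \<and> (\<Sum>s\<in>UNIV. w s) = 1"
    unfolding w_def using assms(1,2,4,8,9)
    by (intro weights) (auto simp: softmax_nonneg softmax_sum)
  have Rnn: "0 \<le> Rmax" using assms(3)[of undefined undefined] by linarith
  have Dnn: "0 \<le> model_dist Pstar Ptil"
  proof -
    have "(\<lambda>(s, a). \<Sum>s'\<in>UNIV. \<bar>Pstar s a s' - Ptil s a s'\<bar>) (undefined, undefined)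
        \<le> model_dist Pstar Ptil" unfolding model_dist_def by (rule Max_ge) auto
    moreover have "0 \<le> (\<lambda>(s, a). \<Sum>s'\<in>UNIV. \<bar>Pstar s a s' - Ptil s a s'\<bar>) (undefined, undefined)"
      by (simp add: sum_nonneg)
    ultimately show ?thesis by linarith
  qed
  have c1: "1 \<le> real (card (UNIV :: 'a set))" by (simp add: Suc_le_eq finite_UNIV_card_ge_0)
  have KLb: "KL_div (softmax_policy Qstar s) (softmax_policy Qtil s) \<le> B" for s
  proof -
    have "KL_div (softmax_policy Qstar s) (softmax_policy Qtil s) \<le> 2 * (model_dist Pstar Ptil * Rmax / (1 - \<gamma>)^2)"
      by (rule KL_softmax_bound) (rule Qdiff[OF assms(1-7)])
    also have "\<dots> \<le> B"
    proof -
      have X: "0 \<le> model_dist Pstar Ptil * Rmax" using Rnn Dnn by simp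
      have "2 * (model_dist Pstar Ptil * Rmax) \<le> 2 * (real (card (UNIV :: 'a set)) * (model_dist Pstar Ptil * Rmax))"
        using mult_right_mono[OF c1 X] by simp
      then have "2 * (model_dist Pstar Ptil * Rmax) / (1 - \<gamma>)^2 \<le> 2 * (real (card (UNIV :: 'a set)) * (model_dist Pstar Ptil * Rmax)) / (1 - \<gamma>)^2"
        by (rule divide_right_mono) simp
      then show ?thesis unfolding B_def by (simp add: mult_ac)
    qed
    finally show ?thesis .
  qed
  have "(\<Sum>s\<in>UNIV. w s * KL_div (softmax_policy Qstar s) (softmax_policy Qtil s)) \<le> (\<Sum>s\<in>UNIV. w s * B)"
    using W KLb by (intro sum_mono mult_left_mono) auto
  also have "\<dots> = B" using W by (simp add: sum_distrib_right[symmetric])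
  finally show ?thesis unfolding w_def B_def .
qed

end
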